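(* For every positive integer $k$, \[ \sum_{i+t\le k}B_{2t}\,2^{2t}\binom{2k+2}{2t,\;2i+1,\;2k-2t-2i+1}=2^{2k+1}(k+1), \] where the sum ranges over all pairs of nonnegative integers $i,t$ with $i+t\le k$.
   Context: The Bernoulli numbers $B_m$ ($m\ge 0$) are defined by $\dfrac{x}{e^x-1}=\sum_{m=0}^\infty B_m\dfrac{x^m}{m!}$. The trinomial coefficient is $\binom{n}{r_1,r_2,r_3}=\dfrac{n!}{r_1!\,r_2!\,r_3!}$ for nonnegative integers $r_1+r_2+r_3=n$. *)

theory Defs
  imports "HOL-Computational_Algebra.Formal_Power_Series"
begin

definition bernoulli :: "nat \<Rightarrow> real" where
  "bernoulli m = fact m * fps_nth (fps_X / (fps_exp 1 - 1)) m"

definition trinomial :: "nat \<Rightarrow> nat \<Rightarrow> nat \<Rightarrow> nat \<Rightarrow> real" where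
  "trinomial n r1 r2 r3 = fact n / (fact r1 * fact r2 * fact r3)"

end

theory Submission imports Defs begin
unbundle fps_syntax
lemma odd_sum:
  fixes m :: nat
  shows "(\<Sum>i\<le>m. fact (2*m+2) / (fact (2*i+1) * fact (2*m+1-2*i)) :: real) = 2^(2*m+1)"
proof -
  have "2 * (\<Sum>j\<le>2*m+2. if odd j then of_nat ((2*m+2) choose j) else 0) = (2 ^ (2*m+2) :: real)"
    by (rule choose_odd_sum) simp
  moreover have "(\<Sum>j\<le>2*m+2. if odd j then of_nat ((2*m+2) choose j) else 0) =
      (\<Sum>j<2*(m+1). if even j then 0 else real ((2*m+2) choose j))"
    by (auto simp: lessThan_Suc_atMost[symmetric] intro!: sum.cong)
  moreover have "\<dots> = (\<Sum>i<m+1. real ((2*m+2) choose (2*i+1)))"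
    using sum_split_even_odd[of "\<lambda>_. 0" _ "m+1"] by simp
  moreover have "\<dots> = (\<Sum>i\<le>m. fact (2*m+2) / (fact (2*i+1) * fact (2*m+1-2*i)))"
  proof (rule sum.cong)
    fix i assume "i \<in> {..m}"
    then have "2*i+1 \<le> 2*m+2" "2*m+2-(2*i+1) = 2*m+1-2*i" by auto
    then show "real ((2*m+2) choose (2*i+1)) = fact (2*m+2) / (fact (2*i+1) * fact (2*m+1-2*i))"
      by (metis binomial_fact)
  qed (simp add: lessThan_Suc_atMost)
  ultimately show ?thesis by simp
qed
definition EE :: "real fps" where "EE = fps_exp 1"
definition bb :: "real fps" where "bb = fps_X / (EE - 1)"
definition cc :: "real fps" where "cc = bb + fps_const (1/2) * fps_X"

lemma D_nz: "EE - 1 \<noteq> 0"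
proof
  assume "EE - 1 = 0"
  then have "(EE - 1) $ 1 = 0" by simp
  then show False by (simp add: EE_def)
qed

lemma D_sub: "subdegree (EE - 1) = 1"
  by (rule subdegreeI) (auto simp: EE_def)

lemma bb_mult: "bb * (EE - 1) = fps_X"
  unfolding bb_def using D_nz D_sub by (intro fps_times_divide_eq) auto

lemma cc_eq: "fps_const 2 * cc * (EE - 1) = fps_X * (EE + 1)"
proof -
  have h2: "fps_const (2::real) * fps_const (1/2) = 1" using fps_const_mult[of "2::real" "1/2"] by simp
  have "fps_const 2 * cc * (EE - 1) = fps_const 2 * (bb * (EE - 1)) + (fps_const 2 * fps_const (1/2)) * (fps_X * (EE - 1))"
    unfolding cc_def by (simp add: algebra_simps)
  also have "\<dots> = fps_const 2 * (bb * (EE - 1)) + fps_X * (EE - 1)" by (simp only: h2 mult_1_left)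
  also have "\<dots> = fps_X * (EE + 1)" unfolding bb_mult
    by (simp add: algebra_simps numeral_fps_const[symmetric])
  finally show ?thesis .
qed

definition sg :: "real fps \<Rightarrow> real fps" where "sg f = f oo (fps_const (-1) * fps_X)"

lemma sg_nth: "sg f $ n = (-1)^n * f $ n"
  unfolding sg_def fps_compose_linear by simp

lemma sg_mult: "sg (f * g) = sg f * sg g"
  unfolding sg_def by (rule fps_compose_mult_distrib) simp

lemma sg_add: "sg (f + g) = sg f + sg g"
  unfolding sg_def by (rule fps_compose_add_distrib)

lemma sg_diff: "sg (f - g) = sg f - sg g"
  unfolding sg_def by (rule fps_compose_sub_distrib)

lemma sg_const: "sg (fps_const a) = fps_const a"
  by (simp add: fps_eq_iff sg_nth)

lemma sg_one: "sg 1 = 1"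
  by (simp add: fps_eq_iff sg_nth)

lemma sg_X: "sg fps_X = - fps_X"
  by (simp add: fps_eq_iff sg_nth)

lemma sg_E: "sg EE * EE = 1"
proof -
  have "sg EE = fps_exp (-1)"
    unfolding sg_def EE_def using fps_exp_compose_linear[of 1 "-1::real"] by simp
  then show ?thesis unfolding EE_def using fps_exp_add_mult[of "-1::real" 1] by simp
qed

lemma sg_cc: "sg cc = cc"
proof -
  have "sg (fps_const 2 * cc * (EE - 1)) = sg (fps_X * (EE + 1))" by (simp add: cc_eq)
  then have h: "fps_const 2 * sg cc * (sg EE - 1) = - fps_X * (sg EE + 1)"
    by (simp add: sg_mult sg_add sg_diff sg_const sg_one sg_X)
  have "fps_const 2 * sg cc * (EE - 1) = (fps_const 2 * sg cc * (sg EE - 1)) * (- EE)"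
    using sg_E by (simp add: algebra_simps)
  also have "\<dots> = (- fps_X * (sg EE + 1)) * (-EE)" by (simp only: h)
  also have "\<dots> = fps_X * (sg EE * EE) + fps_X * EE" by (simp add: algebra_simps)
  also have "\<dots> = fps_X * (EE + 1)" by (simp add: sg_E distrib_left)
  also have "\<dots> = fps_const 2 * cc * (EE - 1)" by (simp add: cc_eq)
  finally have "(fps_const 2 * sg cc) * (EE - 1) = (fps_const 2 * cc) * (EE - 1)" .
  then have "fps_const 2 * sg cc = fps_const 2 * cc" using D_nz by simp
  then show ?thesis by (metis fps_const_eq_0_iff mult_cancel_left zero_neq_numeral)
qed

lemma cc_odd: "odd n \<Longrightarrow> cc $ n = 0"
  using arg_cong[OF sg_cc, of "\<lambda>f. f $ n"] by (simp add: sg_nth)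

lemma bern_cc: "t > 0 \<or> True \<Longrightarrow> bernoulli (2*t) = fact (2*t) * cc $ (2*t)"
  unfolding bernoulli_def cc_def bb_def EE_def by simp

lemma key_sum:
  fixes k :: nat
  shows "(\<Sum>t<k+1. 2 * cc $ (2*t) / fact (2*k+2-2*t)) = 1 / fact (2*k+1)"
proof -
  define N where "N = 2*k+2"
  have "(fps_const 2 * cc * (EE - 1)) $ N = (fps_X * (EE + 1)) $ N" by (simp add: cc_eq)
  moreover have "(fps_X * (EE + 1)) $ N = 1 / fact (2*k+1)"
    by (simp add: N_def EE_def algebra_simps)
  moreover have "(fps_const 2 * cc * (EE - 1)) $ N = (\<Sum>j=0..N. 2 * cc $ j * (EE - 1) $ (N - j))"
  proof -
    have "(fps_const 2 * cc * (EE - 1)) $ N = 2 * (cc * (EE-1)) $ N" by (simp add: mult.assoc)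
    also have "\<dots> = 2 * (\<Sum>j=0..N. cc $ j * (EE - 1) $ (N - j))" by (simp only: fps_mult_nth)
    finally show ?thesis by (simp add: sum_distrib_left mult.assoc)
  qed
  moreover have "\<dots> = (\<Sum>j<N. 2 * cc $ j / fact (N - j))"
    by (auto simp: atLeast0AtMost lessThan_Suc_atMost[symmetric] N_def EE_def
        intro!: sum.cong)
  moreover have "\<dots> = (\<Sum>j<2*(k+1). if even j then 2 * cc $ j / fact (N - j) else 0)"
    by (auto simp: N_def cc_odd intro!: sum.cong)
  moreover have "\<dots> = (\<Sum>t<k+1. 2 * cc $ (2*t) / fact (2*k+2-2*t))"
    using sum_split_even_odd[of "\<lambda>j. 2 * cc $ j / fact (N - j)" "\<lambda>_. 0" "k+1"] by (simp add: N_def)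
  ultimately show ?thesis by simp
qed

lemma helper1:
  fixes A p q r F G :: real
  assumes "G \<noteq> 0" "p * q = r"
  shows "A * p * F / G * q = r * F / 2 * (2 * A / G)"
  using assms by (auto simp: field_simps)

lemma inner:
  fixes k t :: nat assumes "t \<le> k"
  shows "(\<Sum>i\<le>k-t. bernoulli (2 * t) * 2 ^ (2 * t) *
            trinomial (2 * k + 2) (2 * t) (2 * i + 1) (2 * k - 2 * t - 2 * i + 1))
       = 2^(2*k+1) * fact (2*k+2) / 2 * (2 * cc $ (2*t) / fact (2*k+2-2*t))"
proof -
  define m where "m = k - t"
  have km: "k = m + t" using assms m_def by simp
  have "(\<Sum>i\<le>k-t. bernoulli (2 * t) * 2 ^ (2 * t) *
            trinomial (2 * k + 2) (2 * t) (2 * i + 1) (2 * k - 2 * t - 2 * i + 1))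
      = (\<Sum>i\<le>m. (cc $ (2*t) * 2 ^ (2 * t) * fact (2*k+2) / fact (2*m+2)) *
            (fact (2*m+2) / (fact (2*i+1) * fact (2*m+1-2*i))))"
  proof (rule sum.cong)
    fix i assume "i \<in> {..m}"
    then have "2 * k - 2 * t - 2 * i + 1 = 2*m+1-2*i" using km by auto
    then show "bernoulli (2 * t) * 2 ^ (2 * t) *
            trinomial (2 * k + 2) (2 * t) (2 * i + 1) (2 * k - 2 * t - 2 * i + 1) =
        (cc $ (2*t) * 2 ^ (2 * t) * fact (2*k+2) / fact (2*m+2)) *
            (fact (2*m+2) / (fact (2*i+1) * fact (2*m+1-2*i)))"
      by (simp add: bern_cc trinomial_def)
  qed (simp add: m_def)
  also have "\<dots> = (cc $ (2*t) * 2 ^ (2 * t) * fact (2*k+2) / fact (2*m+2)) * 2^(2*m+1)"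
    by (simp only: sum_distrib_left[symmetric] odd_sum)
  also have "\<dots> = 2^(2*k+1) * fact (2*k+2) / 2 * (2 * cc $ (2*t) / fact (2*k+2-2*t))"
  proof -
    have "2*k+2-2*t = 2*m+2" using km by simp
    moreover have "(2::real)^(2*t) * 2^(2*m+1) = 2^(2*k+1)" using km
      by (simp add: power_add[symmetric])
    ultimately show ?thesis using helper1[of "fact (2*m+2)" "2^(2*t)" "2^(2*m+1)" "2^(2*k+1)" "cc $ (2*t)" "fact (2*k+2)"]
      by (simp only:) simp
  qed
  finally show ?thesis .
qed

theorem mainTheorem3:
  fixes k :: nat
  assumes "k \<ge> 1"
  shows "(\<Sum>(i, t) \<in> {(i, t). i + t \<le> k}.
            bernoulli (2 * t) * 2 ^ (2 * t) *
            trinomial (2 * k + 2) (2 * t) (2 * i + 1) (2 * k - 2 * t - 2 * i + 1))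
         = 2 ^ (2 * k + 1) * (real k + 1)"
proof -
  define f where "f = (\<lambda>i t. bernoulli (2 * t) * 2 ^ (2 * t) *
            trinomial (2 * k + 2) (2 * t) (2 * i + 1) (2 * k - 2 * t - 2 * i + 1))"
  have S: "{(i, t). i + t \<le> k} = (\<lambda>(t,i). (i,t)) ` (SIGMA t:{..k}. {..k-t})"
    by (auto simp: image_iff)
  have inj: "inj_on (\<lambda>(t,i). (i,t)) (SIGMA t:{..k}. {..k-t})"
    by (auto simp: inj_on_def)
  have "(\<Sum>(i, t) \<in> {(i, t). i + t \<le> k}. f i t) = (\<Sum>(t,i) \<in> (SIGMA t:{..k}. {..k-t}). f i t)"
    unfolding S by (subst sum.reindex[OF inj]) (simp add: case_prod_unfold)
  also have "\<dots> = (\<Sum>t\<le>k. \<Sum>i\<le>k-t. f i t)"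
    by (rule sum.Sigma[symmetric]) auto
  also have "\<dots> = (\<Sum>t\<le>k. 2^(2*k+1) * fact (2*k+2) / 2 * (2 * cc $ (2*t) / fact (2*k+2-2*t)))"
    unfolding f_def by (intro sum.cong refl inner) simp
  also have "\<dots> = 2^(2*k+1) * fact (2*k+2) / 2 * (\<Sum>t<k+1. 2 * cc $ (2*t) / fact (2*k+2-2*t))"
    by (simp only: sum_distrib_left[symmetric] lessThan_Suc_atMost Suc_eq_plus1[symmetric])
  also have "\<dots> = 2^(2*k+1) * fact (2*k+2) / 2 * (1 / fact (2*k+1))"
    by (simp only: key_sum)
  also have "\<dots> = 2 ^ (2 * k + 1) * (real k + 1)"
  proof -
    have "fact (2*k+2) = (2*real k+2) * (fact (2*k+1) :: real)"
      using fact_Suc[of "2*k+1"] by (simp add: algebra_simps)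
    moreover have "(fact (2*k+1) :: real) > 0" by simp
    ultimately show ?thesis by (simp add: field_simps)
  qed
  finally show ?thesis unfolding f_def .
qed

end
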